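(* Let $0\le k<n$, let $P_1,\dots,P_n$ be pairwise distinct columns of $\mathbb{S}$, and let $y_1\in P_1,\dots,y_k\in P_k$. Let $(\varepsilon_i^j)$ be any family in $\{0,1\}$ indexed by pairs $1\le i<j\le n$ with $j>k$. Then there exist $y_{k+1}\in P_{k+1},\dots,y_n\in P_n$ such that for all $1\le i<j\le n$ with $j>k$: $y_i\to y_j$ iff $\varepsilon_i^j=1$.
   Context: Directed graphs are simple and loopless ($x\to y$ denotes a directed edge, at most one direction between two distinct vertices). $\mathcal{S}$ is the class of finite such graphs in which $x\perp y:\Leftrightarrow\neg(x\to y\vee y\to x)$ is an equivalence relation (its classes are called columns) and satisfying the parity condition: for $x_1\neq x_2$, $y_1\neq y_2$ with $x_1\perp x_2$, $y_1\perp y_2$, the number of directed edges from $\{x_1,x_2\}$ to $\{y_1,y_2\}$ is even. $\mathbb{S}$ (the semigeneric directed graph) is the Fraïssé limit of $\mathcal{S}$, i.e. the countable homogeneous directed graph whose finite induced substructures are exactly the members of $\mathcal{S}$ up to isomorphism. *)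

theory Defs
  imports Main "HOL-Library.Countable_Set"
begin

text \<open>Directed graphs are given by an edge relation E; the vertex set is a set A
  (for finite graphs) or the whole type (for the limit S).\<close>

definition perp :: "('v \<Rightarrow> 'v \<Rightarrow> bool) \<Rightarrow> 'v \<Rightarrow> 'v \<Rightarrow> bool" where
  "perp E x y \<longleftrightarrow> \<not> (E x y \<or> E y x)"

definition perp_rel :: "'v set \<Rightarrow> ('v \<Rightarrow> 'v \<Rightarrow> bool) \<Rightarrow> ('v \<times> 'v) set" where
  "perp_rel A E = {(x, y). x \<in> A \<and> y \<in> A \<and> perp E x y}"

definition in_classS :: "'v set \<Rightarrow> ('v \<Rightarrow> 'v \<Rightarrow> bool) \<Rightarrow> bool" where
  "in_classS A E \<longleftrightarrow>
     finite A \<and>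
     (\<forall>x\<in>A. \<not> E x x) \<and>
     (\<forall>x\<in>A. \<forall>y\<in>A. \<not> (E x y \<and> E y x)) \<and>
     equiv A (perp_rel A E) \<and>
     (\<forall>x1\<in>A. \<forall>x2\<in>A. \<forall>y1\<in>A. \<forall>y2\<in>A.
        x1 \<noteq> x2 \<and> y1 \<noteq> y2 \<and> perp E x1 x2 \<and> perp E y1 y2 \<longrightarrow>
        even (card {(a, b). a \<in> {x1, x2} \<and> b \<in> {y1, y2} \<and> E a b}))"

text \<open>Every finite member of S is isomorphic to one
  with vertices in nat, so it suffices to require that those embed.  By Fraisse's
  theorem such a graph is unique up to isomorphism.\<close>
definition semigeneric :: "('a \<Rightarrow> 'a \<Rightarrow> bool) \<Rightarrow> bool" where
  "semigeneric E \<longleftrightarrow>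
     countable (UNIV :: 'a set) \<and>
     (\<forall>B :: 'a set. finite B \<longrightarrow> in_classS B E) \<and>
     (\<forall>(A :: nat set) F. in_classS A F \<longrightarrow>
        (\<exists>f. inj_on f A \<and> (\<forall>x\<in>A. \<forall>y\<in>A. F x y \<longleftrightarrow> E (f x) (f y)))) \<and>
     (\<forall>A B (f :: 'a \<Rightarrow> 'a). finite A \<and> bij_betw f A B \<and>
        (\<forall>x\<in>A. \<forall>y\<in>A. E x y \<longleftrightarrow> E (f x) (f y)) \<longrightarrow>
        (\<exists>g. bij g \<and> (\<forall>x y. E x y \<longleftrightarrow> E (g x) (g y)) \<and> (\<forall>x\<in>A. g x = f x)))"

definition columns :: "('a \<Rightarrow> 'a \<Rightarrow> bool) \<Rightarrow> 'a set set" where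
  "columns E = UNIV // {(x, y). perp E x y}"

end

theory Submission
  imports Defs
begin

lemma sg_parts:
  assumes "semigeneric E"
  shows "\<forall>B :: 'a set. finite B \<longrightarrow> in_classS B E"
    and "\<forall>(A :: nat set) F. in_classS A F \<longrightarrow>
        (\<exists>f. inj_on f A \<and> (\<forall>x\<in>A. \<forall>y\<in>A. F x y \<longleftrightarrow> E (f x) (f y)))"
    and "\<forall>A B (f :: 'a \<Rightarrow> 'a). finite A \<and> bij_betw f A B \<and>
        (\<forall>x\<in>A. \<forall>y\<in>A. E x y \<longleftrightarrow> E (f x) (f y)) \<longrightarrow>
        (\<exists>g. bij g \<and> (\<forall>x y. E x y \<longleftrightarrow> E (g x) (g y)) \<and> (\<forall>x\<in>A. g x = f x))"
    and "countable (UNIV :: 'a set)"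
proof -
  note h = assms[unfolded semigeneric_def]
  show "\<forall>B :: 'a set. finite B \<longrightarrow> in_classS B E" by (rule conjunct1[OF conjunct2[OF h]])
  show "\<forall>(A :: nat set) F. in_classS A F \<longrightarrow>
        (\<exists>f. inj_on f A \<and> (\<forall>x\<in>A. \<forall>y\<in>A. F x y \<longleftrightarrow> E (f x) (f y)))"
    by (rule conjunct1[OF conjunct2[OF conjunct2[OF h]]])
  show "\<forall>A B (f :: 'a \<Rightarrow> 'a). finite A \<and> bij_betw f A B \<and>
        (\<forall>x\<in>A. \<forall>y\<in>A. E x y \<longleftrightarrow> E (f x) (f y)) \<longrightarrow>
        (\<exists>g. bij g \<and> (\<forall>x y. E x y \<longleftrightarrow> E (g x) (g y)) \<and> (\<forall>x\<in>A. g x = f x))"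
    by (rule conjunct2[OF conjunct2[OF conjunct2[OF h]]])
  show "countable (UNIV :: 'a set)" by (rule conjunct1[OF h])
qed

lemma sg_class: "semigeneric E \<Longrightarrow> finite B \<Longrightarrow> in_classS B E"
  using sg_parts(1) by blast

lemma sg_embed: "semigeneric E \<Longrightarrow> in_classS (A::nat set) F \<Longrightarrow>
   \<exists>f. inj_on f A \<and> (\<forall>x\<in>A. \<forall>y\<in>A. F x y \<longleftrightarrow> E (f x) (f y))"
  using sg_parts(2) by blast

lemma sg_homog: "semigeneric E \<Longrightarrow> finite A \<Longrightarrow> bij_betw f A B \<Longrightarrow>
   (\<forall>x\<in>A. \<forall>y\<in>A. E x y \<longleftrightarrow> E (f x) (f y)) \<Longrightarrow>
   \<exists>g. bij g \<and> (\<forall>x y. E x y \<longleftrightarrow> E (g x) (g y)) \<and> (\<forall>x\<in>A. g x = f x)"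
  using sg_parts(3) by blast

lemma cls_parts:
  assumes "in_classS A E"
  shows "\<forall>x\<in>A. \<not> E x x" and "\<forall>x\<in>A. \<forall>y\<in>A. \<not> (E x y \<and> E y x)" and "equiv A (perp_rel A E)"
proof -
  note h = assms[unfolded in_classS_def]
  show "\<forall>x\<in>A. \<not> E x x" by (rule conjunct1[OF conjunct2[OF h]])
  show "\<forall>x\<in>A. \<forall>y\<in>A. \<not> (E x y \<and> E y x)" by (rule conjunct1[OF conjunct2[OF conjunct2[OF h]]])
  show "equiv A (perp_rel A E)" by (rule conjunct1[OF conjunct2[OF conjunct2[OF conjunct2[OF h]]]])
qed

lemma cls_loop: "in_classS A E \<Longrightarrow> x \<in> A \<Longrightarrow> \<not> E x x"
  using cls_parts(1) by blast

lemma cls_asym: "in_classS A E \<Longrightarrow> x \<in> A \<Longrightarrow> y \<in> A \<Longrightarrow> \<not> (E x y \<and> E y x)"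
  using cls_parts(2) by blast

lemma cls_equiv: "in_classS A E \<Longrightarrow> equiv A (perp_rel A E)"
  using cls_parts(3) by blast

lemma sg_loop: "semigeneric E \<Longrightarrow> \<not> E x x"
  using cls_loop[OF sg_class[of E "{x}"]] by simp

lemma sg_asym: "semigeneric E \<Longrightarrow> \<not> (E x y \<and> E y x)"
  using cls_asym[OF sg_class[of E "{x,y}"]] by simp

lemma sg_equiv: assumes "semigeneric E" shows "equiv UNIV {(x,y). perp E x y}"
proof -
  have t: "perp E x w" if "perp E x y" "perp E y w" for x y w
  proof -
    have "equiv {x,y,w} (perp_rel {x,y,w} E)"
      using cls_equiv[OF sg_class[OF assms, of "{x,y,w}"]] by simp
    then have "trans (perp_rel {x,y,w} E)" by (simp add: equiv_def)
    moreover have "(x, y) \<in> perp_rel {x,y,w} E" "(y, w) \<in> perp_rel {x,y,w} E"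
      using that by (auto simp: perp_rel_def)
    ultimately have "(x, w) \<in> perp_rel {x,y,w} E" by (rule transD)
    then show ?thesis by (simp add: perp_rel_def)
  qed
  show ?thesis unfolding equiv_def
  proof (intro conjI)
    show "refl_on UNIV {(x, y). perp E x y}"
      by (rule refl_onI) (simp_all add: perp_def sg_loop[OF assms])
    show "{(x, y). perp E x y} \<subseteq> UNIV \<times> UNIV" by simp
    show "sym {(x, y). perp E x y}" by (rule symI) (auto simp: perp_def)
    show "trans {(x, y). perp E x y}" by (rule transI) (use t in blast)
  qed
qed

lemma ext:
  fixes E :: "'a \<Rightarrow> 'a \<Rightarrow> bool"
  assumes sg: "semigeneric E" and fin: "finite A"
    and dist: "\<forall>a\<in>A. \<forall>b\<in>A. perp E a b \<longrightarrow> a = b"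
    and qA: "\<forall>a\<in>A. \<not> perp E q a"
  shows "\<exists>w. perp E w q \<and> (\<forall>a\<in>A. E a w \<longleftrightarrow> \<phi> a)"
proof -
  have "countable (UNIV :: 'a set)" using sg_parts(4)[OF sg] .
  then obtain \<iota> :: "'a \<Rightarrow> nat" where \<iota>: "inj \<iota>" unfolding countable_def by blast
  define C where "C = insert q A"
  define V0 where "V0 = \<iota> ` C"
  have finV0: "finite V0" using fin by (simp add: V0_def C_def)
  obtain N where N: "N \<notin> V0" using ex_new_if_finite[OF infinite_UNIV_nat finV0] by blast
  define r where "r = inv \<iota>"
  have r: "r (\<iota> c) = c" for c using \<iota> by (simp add: r_def)
  have qnA: "q \<notin> A" using qA sg_loop[OF sg] by (auto simp: perp_def)
  have ptA: "\<iota> c \<in> \<iota> ` A \<longleftrightarrow> c \<in> A" for c using \<iota> by (auto simp: inj_def)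
  have iN: "\<iota> c \<noteq> N" if "c \<in> C" for c using N that by (auto simp: V0_def)
  define F where "F u v = (if u = N then (if v = N then False else v \<in> \<iota>`A \<and> \<not> \<phi> (r v))
      else if v = N then u \<in> \<iota>`A \<and> \<phi> (r u) else E (r u) (r v))" for u v
  define V where "V = insert N V0"
  have F1: "F (\<iota> c1) (\<iota> c2) = E c1 c2" if "c1 \<in> C" "c2 \<in> C" for c1 c2
    using iN that by (simp add: F_def r)
  have F2: "F N (\<iota> c) = (c \<in> A \<and> \<not> \<phi> c)" if "c \<in> C" for c
    using iN that by (simp add: F_def r ptA)
  have F3: "F (\<iota> c) N = (c \<in> A \<and> \<phi> c)" if "c \<in> C" for c
    using iN that by (simp add: F_def r ptA)
  have F4: "\<not> F N N" by (simp add: F_def)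
  have perpC: "c1 = c2" if "c1 \<in> C" "c2 \<in> C" "perp E c1 c2" for c1 c2
    using that dist qA by (auto simp: C_def perp_def)
  have Vcases: "u = N \<or> (\<exists>c\<in>C. u = \<iota> c)" if "u \<in> V" for u
    using that by (auto simp: V_def V0_def)
  have perpV: "perp F u v \<longleftrightarrow> (u = v \<or> (u = \<iota> q \<and> v = N) \<or> (u = N \<and> v = \<iota> q))"
    if "u \<in> V" "v \<in> V" for u v
  proof -
    have qC: "q \<in> C" by (simp add: C_def)
    from Vcases[OF that(1)] Vcases[OF that(2)] show ?thesis
    proof (elim disjE bexE)
      assume "u = N" "v = N" thus ?thesis using F4 by (simp add: perp_def)
    next
      fix c assume "u = N" "c \<in> C" "v = \<iota> c" thus ?thesis
        using F2 F3 iN qnA by (auto simp: perp_def C_def inj_eq[OF \<iota>])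
    next
      fix c assume "v = N" "c \<in> C" "u = \<iota> c" thus ?thesis
        using F2 F3 iN qnA by (auto simp: perp_def C_def inj_eq[OF \<iota>])
    next
      fix c d assume "c \<in> C" "u = \<iota> c" "d \<in> C" "v = \<iota> d" thus ?thesis
        using F1 perpC iN[OF qC] sg_loop[OF sg] iN by (auto simp: perp_def inj_eq[OF \<iota>])
    qed
  qed
  have qV: "\<iota> q \<in> V" "N \<in> V" by (auto simp: V_def V0_def C_def)
  have qN: "\<iota> q \<noteq> N" using iN by (simp add: C_def)
  have cls: "in_classS V F"
    unfolding in_classS_def
  proof (intro conjI)
    show "finite V" using finV0 by (simp add: V_def)
    show "\<forall>x\<in>V. \<not> F x x"
    proof
      fix x assume "x \<in> V"
      from Vcases[OF this] show "\<not> F x x" using F1 F4 sg_loop[OF sg] by auto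
    qed
    show "\<forall>x\<in>V. \<forall>y\<in>V. \<not> (F x y \<and> F y x)"
    proof (intro ballI)
      fix x y assume "x \<in> V" "y \<in> V"
      from Vcases[OF this(1)] Vcases[OF this(2)] show "\<not> (F x y \<and> F y x)"
      proof (elim disjE bexE)
        assume "x = N" "y = N" thus ?thesis using F4 by simp
      next
        fix c assume "x = N" "c \<in> C" "y = \<iota> c" thus ?thesis using F2 F3 by auto
      next
        fix c assume "y = N" "c \<in> C" "x = \<iota> c" thus ?thesis using F2 F3 by auto
      next
        fix c d assume "c \<in> C" "x = \<iota> c" "d \<in> C" "y = \<iota> d" thus ?thesis
          using F1 sg_asym[OF sg] by auto
      qed
    qed
    show "equiv V (perp_rel V F)"
      unfolding equiv_def
    proof (intro conjI)
      show "refl_on V (perp_rel V F)"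
        unfolding refl_on_def perp_rel_def using perpV by auto
      show "perp_rel V F \<subseteq> V \<times> V" by (auto simp: perp_rel_def)
      show "sym (perp_rel V F)"
        unfolding sym_def perp_rel_def perp_def by auto
      show "trans (perp_rel V F)"
      proof (rule transI)
        fix x y z assume "(x, y) \<in> perp_rel V F" "(y, z) \<in> perp_rel V F"
        then have xyz: "x \<in> V" "y \<in> V" "z \<in> V" "perp F x y" "perp F y z"
          by (auto simp: perp_rel_def)
        then have "x = y \<or> (x = \<iota> q \<and> y = N) \<or> (x = N \<and> y = \<iota> q)"
          "y = z \<or> (y = \<iota> q \<and> z = N) \<or> (y = N \<and> z = \<iota> q)"
          using perpV by blast+
        then have "x = z \<or> (x = \<iota> q \<and> z = N) \<or> (x = N \<and> z = \<iota> q)"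
          using qN by blast
        then have "perp F x z" using perpV xyz by blast
        then show "(x, z) \<in> perp_rel V F" using xyz by (simp add: perp_rel_def)
      qed
    qed
    show "\<forall>x1\<in>V. \<forall>x2\<in>V. \<forall>y1\<in>V. \<forall>y2\<in>V. x1 \<noteq> x2 \<and> y1 \<noteq> y2 \<and> perp F x1 x2 \<and> perp F y1 y2 \<longrightarrow>
        even (card {(a, b). a \<in> {x1, x2} \<and> b \<in> {y1, y2} \<and> F a b})"
    proof (intro ballI impI)
      fix x1 x2 y1 y2 assume V: "x1 \<in> V" "x2 \<in> V" "y1 \<in> V" "y2 \<in> V"
        and h: "x1 \<noteq> x2 \<and> y1 \<noteq> y2 \<and> perp F x1 x2 \<and> perp F y1 y2"
      have "{x1,x2} = {\<iota> q, N}" "{y1,y2} = {\<iota> q, N}" using perpV V h by auto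
      moreover have "\<not> F (\<iota> q) (\<iota> q)" "\<not> F N (\<iota> q)" "\<not> F (\<iota> q) N"
        using F1 F2 F3 qnA sg_loop[OF sg] by (auto simp: C_def)
      ultimately have "{(a, b). a \<in> {x1, x2} \<and> b \<in> {y1, y2} \<and> F a b} = {}"
        using F4 by auto
      then show "even (card {(a, b). a \<in> {x1, x2} \<and> b \<in> {y1, y2} \<and> F a b})"
        by (simp only: card.empty) simp
    qed
  qed
  then obtain f where finj: "inj_on f V" and fpres: "\<forall>x\<in>V. \<forall>y\<in>V. F x y \<longleftrightarrow> E (f x) (f y)"
    using sg_embed[OF sg cls] by blast
  define B where "B = f ` V0"
  define h where "h b = r (inv_into V0 f b)" for b
  have finj0: "inj_on f V0" using finj by (rule inj_on_subset) (auto simp: V_def)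
  have hf: "h (f (\<iota> c)) = c" if "c \<in> C" for c
    using that finj0 by (simp add: h_def V0_def r)
  have Bc: "B = (\<lambda>c. f (\<iota> c)) ` C" by (auto simp: B_def V0_def)
  have Vc: "\<iota> c \<in> V" if "c \<in> C" for c using that by (simp add: V_def V0_def)
  have bij: "bij_betw h B C"
    unfolding bij_betw_def inj_on_def Bc using hf by (auto simp: image_image)
  have pres: "\<forall>x\<in>B. \<forall>y\<in>B. E x y \<longleftrightarrow> E (h x) (h y)"
    unfolding Bc using hf fpres Vc F1 by auto
  have finB: "finite B" using finV0 by (simp add: B_def)
  obtain g where gE: "\<forall>x y. E x y \<longleftrightarrow> E (g x) (g y)" and gh: "\<forall>x\<in>B. g x = h x"
    using sg_homog[OF sg finB bij pres] by blast
  have gc: "g (f (\<iota> c)) = c" if "c \<in> C" for c using gh hf that Bc by auto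
  define w where "w = g (f N)"
  have "perp E w q"
  proof -
    have qC: "q \<in> C" by (simp add: C_def)
    have "E w q \<longleftrightarrow> F N (\<iota> q)"
      using gE[rule_format, of "f N" "f (\<iota> q)"] gc[OF qC] fpres qV by (simp add: w_def)
    moreover have "E q w \<longleftrightarrow> F (\<iota> q) N"
      using gE[rule_format, of "f (\<iota> q)" "f N"] gc[OF qC] fpres qV by (simp add: w_def)
    ultimately show ?thesis using F2 F3 qC qnA by (simp add: perp_def)
  qed
  moreover have "\<forall>a\<in>A. E a w \<longleftrightarrow> \<phi> a"
  proof
    fix a assume a: "a \<in> A"
    then have aC: "a \<in> C" by (simp add: C_def)
    have "E a w \<longleftrightarrow> F (\<iota> a) N"
      using gE[rule_format, of "f (\<iota> a)" "f N"] gc[OF aC] fpres qV Vc[OF aC] by (simp add: w_def)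
    then show "E a w \<longleftrightarrow> \<phi> a" using F3[OF aC] a by simp
  qed
  ultimately show ?thesis by blast
qed


theorem lemma1:
  fixes E :: "'a \<Rightarrow> 'a \<Rightarrow> bool"
    and n k :: nat
    and P :: "nat \<Rightarrow> 'a set"
    and y :: "nat \<Rightarrow> 'a"
    and \<epsilon> :: "nat \<Rightarrow> nat \<Rightarrow> nat"
  assumes "semigeneric E"
    and "k < n"
    and "\<forall>i\<in>{1..n}. P i \<in> columns E"
    and "inj_on P {1..n}"
    and "\<forall>i\<in>{1..k}. y i \<in> P i"
    and "\<forall>i j. 1 \<le> i \<and> i < j \<and> j \<le> n \<and> k < j \<longrightarrow> \<epsilon> i j \<in> {0, 1}"
  shows "\<exists>z :: nat \<Rightarrow> 'a. (\<forall>i\<in>{1..k}. z i = y i) \<and> (\<forall>i\<in>{k+1..n}. z i \<in> P i) \<and>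
           (\<forall>i j. 1 \<le> i \<and> i < j \<and> j \<le> n \<and> k < j \<longrightarrow> (E (z i) (z j) \<longleftrightarrow> \<epsilon> i j = 1))"
proof -
  note sg = assms(1)
  define R where "R = {(x, y). perp E x y}"
  have eq: "equiv UNIV R" using sg_equiv[OF sg] by (simp add: R_def)
  have col: "P i \<in> UNIV // R" if "i \<in> {1..n}" for i
    using assms(3) that by (simp add: columns_def R_def)
  have same: "perp E a b" if "i \<in> {1..n}" "a \<in> P i" "b \<in> P i" for i a b
    using in_quotient_imp_in_rel[OF eq col[OF that(1)], of a b] that by (simp add: R_def)
  have closed: "b \<in> P i" if "i \<in> {1..n}" "a \<in> P i" "perp E a b" for i a b
    using in_quotient_imp_closed[OF eq col[OF that(1)] that(2), of b] that by (simp add: R_def)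
  have diff: "\<not> perp E a b" if "i \<in> {1..n}" "l \<in> {1..n}" "i \<noteq> l" "a \<in> P i" "b \<in> P l" for i l a b
  proof
    assume "perp E a b"
    then have "(a, b) \<in> R" by (simp add: R_def)
    then have "P i = P l" by (rule quotient_eqI[OF eq col[OF that(1)] col[OF that(2)] that(4) that(5)])
    then show False using assms(4) that(1-3) unfolding inj_on_def by blast
  qed
  have main: "\<exists>z :: nat \<Rightarrow> 'a. (\<forall>i\<in>{1..k}. z i = y i) \<and> (\<forall>i\<in>{1..m}. z i \<in> P i) \<and>
           (\<forall>i j. 1 \<le> i \<and> i < j \<and> j \<le> m \<and> k < j \<longrightarrow> (E (z i) (z j) \<longleftrightarrow> \<epsilon> i j = 1))"
    if "k \<le> m" "m \<le> n" for m
    using that(1) that(2)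
  proof (induction m rule: dec_induct)
    case base
    show ?case
    proof (rule exI[of _ y], intro conjI ballI allI impI)
      fix i assume "i \<in> {1..k}" then show "y i \<in> P i" using assms(5) by blast
    next
      fix i j assume "1 \<le> i \<and> i < j \<and> j \<le> k \<and> k < j"
      then show "E (y i) (y j) \<longleftrightarrow> \<epsilon> i j = 1" by linarith
    qed simp
  next
    case (step m)
    have mn: "Suc m \<le> n" "k \<le> m" using step.prems step.hyps by auto
    then have "m \<le> n" by simp
    from step.IH[OF this]
    obtain z where z1: "\<forall>i\<in>{1..k}. z i = y i" and z2: "\<forall>i\<in>{1..m}. z i \<in> P i"
      and z3: "\<forall>i j. 1 \<le> i \<and> i < j \<and> j \<le> m \<and> k < j \<longrightarrow> (E (z i) (z j) \<longleftrightarrow> \<epsilon> i j = 1)"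
      by blast
    have m1: "Suc m \<in> {1..n}" using mn by auto
    obtain q where q: "q \<in> P (Suc m)"
      using in_quotient_imp_non_empty[OF eq col[OF m1]] by blast
    define A where "A = z ` {1..m}"
    have zinj: "z i = z l \<longleftrightarrow> i = l" if "i \<in> {1..m}" "l \<in> {1..m}" for i l
    proof
      assume "z i = z l"
      show "i = l"
      proof (rule ccontr)
        assume "i \<noteq> l"
        moreover have "perp E (z i) (z l)" using \<open>z i = z l\<close> sg_loop[OF sg] by (simp add: perp_def)
        moreover have "i \<in> {1..n}" "l \<in> {1..n}" using that mn by auto
        ultimately show False using diff[of i l "z i" "z l"] z2 that by blast
      qed
    qed simp
    have distA: "\<forall>a\<in>A. \<forall>b\<in>A. perp E a b \<longrightarrow> a = b"
    proof (intro ballI impI)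
      fix a b assume "a \<in> A" "b \<in> A" "perp E a b"
      then obtain i l where il: "i \<in> {1..m}" "l \<in> {1..m}" "a = z i" "b = z l"
        by (auto simp: A_def)
      have iln: "i \<in> {1..n}" "l \<in> {1..n}" using il mn by auto
      show "a = b"
      proof (cases "i = l")
        case True then show ?thesis using il by simp
      next
        case False
        then show ?thesis using diff[OF iln False, of a b] il z2 \<open>perp E a b\<close> by auto
      qed
    qed
    have qA: "\<forall>a\<in>A. \<not> perp E q a"
    proof
      fix a assume "a \<in> A"
      then obtain i where i: "i \<in> {1..m}" "a = z i" by (auto simp: A_def)
      have "i \<in> {1..n}" "i \<noteq> Suc m" using i mn by auto
      then show "\<not> perp E q a"
        using diff[of "Suc m" i q a] i q z2 m1 by blast
    qed
    obtain w where w1: "perp E w q"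
      and w2: "\<forall>a\<in>A. E a w \<longleftrightarrow> (\<exists>i\<in>{1..m}. z i = a \<and> \<epsilon> i (Suc m) = 1)"
      using ext[OF sg _ distA qA, of "\<lambda>a. \<exists>i\<in>{1..m}. z i = a \<and> \<epsilon> i (Suc m) = 1"]
      by (auto simp: A_def)
    have wP: "w \<in> P (Suc m)"
      using closed[OF m1 q] w1 by (simp add: perp_def)
    define z' where "z' = z(Suc m := w)"
    show ?case
    proof (rule exI[of _ z'], intro conjI allI impI ballI)
      fix i assume "i \<in> {1..k}" then show "z' i = y i" using z1 mn by (auto simp: z'_def)
    next
      fix i assume "i \<in> {1..Suc m}" then show "z' i \<in> P i" using z2 wP by (auto simp: z'_def)
    next
      fix i j assume h: "1 \<le> i \<and> i < j \<and> j \<le> Suc m \<and> k < j"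
      show "E (z' i) (z' j) \<longleftrightarrow> \<epsilon> i j = 1"
      proof (cases "j = Suc m")
        case True
        then have im: "i \<in> {1..m}" using h by auto
        then have "E (z' i) (z' j) \<longleftrightarrow> E (z i) w" using True by (simp add: z'_def)
        also have "\<dots> \<longleftrightarrow> (\<exists>l\<in>{1..m}. z l = z i \<and> \<epsilon> l (Suc m) = 1)"
          using w2 im by (auto simp: A_def)
        also have "\<dots> \<longleftrightarrow> \<epsilon> i j = 1" using zinj im True by auto
        finally show ?thesis .
      next
        case False
        then show ?thesis using h z3 by (simp add: z'_def)
      qed
    qed
  qed
  obtain z where "(\<forall>i\<in>{1..k}. z i = y i)" "(\<forall>i\<in>{1..n}. z i \<in> P i)"
    "(\<forall>i j. 1 \<le> i \<and> i < j \<and> j \<le> n \<and> k < j \<longrightarrow> (E (z i) (z j) \<longleftrightarrow> \<epsilon> i j = 1))"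
    using main[of n] assms(2) by auto
  then show ?thesis by (intro exI[of _ z]) auto
qed

end
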